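(* Let $H_{ij}$, $i=1,\ldots,b$, $j=1,\ldots,s_i$, be $n=\sum_i s_i$ null hypotheses with $p$-values $P_{ij}$, where true-null $p$-values are $U(0,1)$, the rows $(P_{i1},\ldots,P_{is_i})$ are mutually independent across $i$, and within each row $i$ the $p$-values are positively dependent in the sense that for every true-null $p$-value $P_{ij}$ and every coordinatewise non-decreasing function $\phi_i$, $E\{\phi_i(P_{i1},\ldots,P_{is_i})\mid P_{ij}\le u\}$ is non-decreasing in $u\in(0,1)$. Let $\widehat n_0(\mathbf P)>0$ be an estimator satisfying Property 1, fix $\alpha\in(0,1)$, and apply the adaptive BH method: (1) set $\widehat\pi_0=\widehat n_0/n$ and $Q_{ij}=\widehat\pi_0P_{ij}$; (2) with $\tilde P_i=\bar s\min_{1\le j\le s_i}P_{ij}$, $\bar s=n/b$, ordered as $\tilde P_{(1)}\le\cdots\le\tilde P_{(b)}$, and $\tilde Q_{(i)}=\widehat\pi_0\tilde P_{(i)}$, $\tilde Q_i=\widehat\pi_0\tilde P_i$, let $B^*=\max\{1\le i\le b:\tilde Q_{(i)}\le i\alpha/b\}$; (3) if this maximum exists, reject $H_{ij}$ for all $(i,j)$ with $\tilde Q_i\le\tilde Q_{(B^* )}$ and $Q_{ij}\le B^*\alpha/n$, otherwise reject nothing. Then the false discovery rate of this method is at most $\alpha$.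
   Context: $H_{ij}=0$ means $H_{ij}$ is true. FDR $=E(V/\max\{R,1\})$ with $V$ the number of rejected true nulls and $R$ the number of rejections. $\mathbf P=((P_{ij}))$; $\mathbf P^{(-i)}$ is $\mathbf P$ with row $i$ deleted, and $\widehat n_0(\mathbf P^{(-i)},\mathbf 0)$ is $\widehat n_0(\mathbf P)$ with the entries of row $i$ replaced by $0$. $E_{DU}$ denotes expectation under the Dirac-uniform configuration of $\mathbf P^{(-i)}$: $p$-values of false nulls set to $0$, the others $U(0,1)$, rows independent. Property 1: $\widehat n_0(\mathbf P)$ is non-decreasing in each $P_{ij}$ and $\sum_{i=1}^b\sum_{j=1}^{s_i}I(H_{ij}=0)E_{DU}\{1/\widehat n_0(\mathbf P^{(-i)},\mathbf 0)\}\le1$. *)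

theory Defs
  imports "HOL-Probability.Probability"
begin

(* Index set of the hypotheses H_{ij}: rows i = 0..b-1, columns j = 0..s i - 1
   (0-based versions of i = 1..b, j = 1..s_i). *)
definition idx :: "nat \<Rightarrow> (nat \<Rightarrow> nat) \<Rightarrow> (nat \<times> nat) set" where
  "idx b s = (SIGMA i:{..<b}. {..<s i})"

definition ntot :: "nat \<Rightarrow> (nat \<Rightarrow> nat) \<Rightarrow> nat" where
  "ntot b s = (\<Sum>i<b. s i)"

definition pmat :: "nat \<Rightarrow> (nat \<Rightarrow> nat) \<Rightarrow> (nat \<Rightarrow> nat \<Rightarrow> 'a \<Rightarrow> real) \<Rightarrow> 'a \<Rightarrow> (nat \<times> nat \<Rightarrow> real)" where
  "pmat b s P w = restrict (\<lambda>(i,j). P i j w) (idx b s)"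

definition prow :: "(nat \<Rightarrow> nat) \<Rightarrow> (nat \<Rightarrow> nat \<Rightarrow> 'a \<Rightarrow> real) \<Rightarrow> nat \<Rightarrow> 'a \<Rightarrow> (nat \<Rightarrow> real)" where
  "prow s P i w = restrict (\<lambda>j. P i j w) {..<s i}"

definition cexp_le :: "'a measure \<Rightarrow> ('a \<Rightarrow> real) \<Rightarrow> ('a \<Rightarrow> real) \<Rightarrow> real \<Rightarrow> real" where
  "cexp_le M Y Z u =
     (\<integral>w. Y w * indicator {w \<in> space M. Z w \<le> u} w \<partial>M) / measure M {w \<in> space M. Z w \<le> u}"

(* Adaptive BH method, given the estimate c = n0hat(P), the level alpha and the matrix X. *)
definition pihat :: "nat \<Rightarrow> (nat \<Rightarrow> nat) \<Rightarrow> real \<Rightarrow> real" where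
  "pihat b s c = c / real (ntot b s)"

definition qtil :: "nat \<Rightarrow> (nat \<Rightarrow> nat) \<Rightarrow> real \<Rightarrow> (nat \<times> nat \<Rightarrow> real) \<Rightarrow> nat \<Rightarrow> real" where
  "qtil b s c X i = pihat b s c * ((real (ntot b s) / real b) * Min ((\<lambda>j. X (i,j)) ` {..<s i}))"

definition qtil_ord :: "nat \<Rightarrow> (nat \<Rightarrow> nat) \<Rightarrow> real \<Rightarrow> (nat \<times> nat \<Rightarrow> real) \<Rightarrow> nat \<Rightarrow> real" where
  "qtil_ord b s c X k = sort (map (qtil b s c X) [0..<b]) ! (k - 1)"

definition bstar_set :: "nat \<Rightarrow> (nat \<Rightarrow> nat) \<Rightarrow> real \<Rightarrow> real \<Rightarrow> (nat \<times> nat \<Rightarrow> real) \<Rightarrow> nat set" where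
  "bstar_set b s \<alpha> c X = {k \<in> {1..b}. qtil_ord b s c X k \<le> real k * \<alpha> / real b}"

definition abh_rejects :: "nat \<Rightarrow> (nat \<Rightarrow> nat) \<Rightarrow> real \<Rightarrow> real \<Rightarrow> (nat \<times> nat \<Rightarrow> real) \<Rightarrow> nat \<Rightarrow> nat \<Rightarrow> bool" where
  "abh_rejects b s \<alpha> c X i j \<longleftrightarrow>
     bstar_set b s \<alpha> c X \<noteq> {} \<and>
     (let B = Max (bstar_set b s \<alpha> c X) in
        qtil b s c X i \<le> qtil_ord b s c X B \<and>
        pihat b s c * X (i,j) \<le> real B * \<alpha> / real (ntot b s))"

(* Number of rejections R and of false rejections V (truenull i j means H_ij = 0, i.e. H_ij true). *)
definition num_rej :: "nat \<Rightarrow> (nat \<Rightarrow> nat) \<Rightarrow> real \<Rightarrow> real \<Rightarrow> (nat \<times> nat \<Rightarrow> real) \<Rightarrow> nat" where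
  "num_rej b s \<alpha> c X = card {(i,j) \<in> idx b s. abh_rejects b s \<alpha> c X i j}"

definition num_false_rej :: "nat \<Rightarrow> (nat \<Rightarrow> nat) \<Rightarrow> (nat \<Rightarrow> nat \<Rightarrow> bool) \<Rightarrow> real \<Rightarrow> real \<Rightarrow> (nat \<times> nat \<Rightarrow> real) \<Rightarrow> nat" where
  "num_false_rej b s truenull \<alpha> c X = card {(i,j) \<in> idx b s. truenull i j \<and> abh_rejects b s \<alpha> c X i j}"

definition abh_fdr :: "'a measure \<Rightarrow> nat \<Rightarrow> (nat \<Rightarrow> nat) \<Rightarrow> (nat \<Rightarrow> nat \<Rightarrow> bool) \<Rightarrow> real
     \<Rightarrow> ((nat \<times> nat \<Rightarrow> real) \<Rightarrow> real) \<Rightarrow> (nat \<Rightarrow> nat \<Rightarrow> 'a \<Rightarrow> real) \<Rightarrow> real" where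
  "abh_fdr M b s truenull \<alpha> n0hat P =
     (\<integral>w. (let X = pmat b s P w; c = n0hat X in
            real (num_false_rej b s truenull \<alpha> c X) / real (max (num_rej b s \<alpha> c X) 1)) \<partial>M)"

(* n0hat(P^(-i), 0) under the Dirac-uniform configuration: row i set to 0,
   false-null p-values set to 0, true-null p-values of the other rows kept. *)
definition du_mat :: "nat \<Rightarrow> (nat \<Rightarrow> nat) \<Rightarrow> (nat \<Rightarrow> nat \<Rightarrow> bool) \<Rightarrow> (nat \<Rightarrow> nat \<Rightarrow> 'a \<Rightarrow> real) \<Rightarrow> nat \<Rightarrow> 'a \<Rightarrow> (nat \<times> nat \<Rightarrow> real)" where
  "du_mat b s truenull P i w =
     restrict (\<lambda>(k,l). if k = i \<or> \<not> truenull k l then 0 else P k l w) (idx b s)"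

end

theory Submission
  imports Defs
begin

lemma sort_kth_le:
  fixes f :: "nat \<Rightarrow> real"
  assumes k: "1 \<le> k" "k \<le> b"
  shows "sort (map f [0..<b]) ! (k - 1) \<le> \<theta> \<longleftrightarrow> k \<le> card {l. l < b \<and> f l \<le> \<theta>}"
proof -
  define L where "L = sort (map f [0..<b])"
  have len: "length L = b" by (simp add: L_def)
  have sorted: "sorted L" by (simp add: L_def)
  have "card {l. l < b \<and> f l \<le> \<theta>} = length (filter (\<lambda>x. x \<le> \<theta>) (map f [0..<b]))"
    by (simp add: length_filter_conv_card cong: conj_cong)
  also have "\<dots> = length (filter (\<lambda>x. x \<le> \<theta>) L)"
    unfolding L_def
    by (metis mset_filter mset_sort size_mset)
  also have "\<dots> = card {m. m < b \<and> L ! m \<le> \<theta>}"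
    by (simp add: length_filter_conv_card len)
  finally have eq: "card {l. l < b \<and> f l \<le> \<theta>} = card {m. m < b \<and> L ! m \<le> \<theta>}" .
  show ?thesis
  proof
    assume h: "sort (map f [0..<b]) ! (k - 1) \<le> \<theta>"
    have "{..<k} \<subseteq> {m. m < b \<and> L ! m \<le> \<theta>}"
    proof
      fix m assume "m \<in> {..<k}"
      then have "m \<le> k - 1" "k - 1 < length L" using k len by auto
      then have "L ! m \<le> L ! (k - 1)" using sorted by (simp add: sorted_nth_mono)
      then show "m \<in> {m. m < b \<and> L ! m \<le> \<theta>}" using h \<open>m \<le> k - 1\<close> k L_def by auto
    qed
    then have "card {..<k} \<le> card {m. m < b \<and> L ! m \<le> \<theta>}"
      by (intro card_mono) auto
    then show "k \<le> card {l. l < b \<and> f l \<le> \<theta>}" using eq by simp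
  next
    assume h: "k \<le> card {l. l < b \<and> f l \<le> \<theta>}"
    show "sort (map f [0..<b]) ! (k - 1) \<le> \<theta>"
    proof (rule ccontr)
      assume "\<not> ?thesis"
      then have gt: "L ! (k - 1) > \<theta>" by (simp add: L_def)
      have "{m. m < b \<and> L ! m \<le> \<theta>} \<subseteq> {..<k-1}"
      proof
        fix m assume m: "m \<in> {m. m < b \<and> L ! m \<le> \<theta>}"
        show "m \<in> {..<k-1}"
        proof (rule ccontr)
          assume "m \<notin> {..<k-1}"
          then have "k - 1 \<le> m" by auto
          then have "L ! (k-1) \<le> L ! m" using sorted m len by (simp add: sorted_nth_mono)
          then show False using m gt by auto
        qed
      qed
      then have "card {m. m < b \<and> L ! m \<le> \<theta>} \<le> k - 1"
        by (metis card_lessThan card_mono finite_lessThan)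
      then show False using h eq k by linarith
    qed
  qed
qed


definition rowmin :: "(nat \<Rightarrow> nat) \<Rightarrow> (nat \<times> nat \<Rightarrow> real) \<Rightarrow> nat \<Rightarrow> real" where
  "rowmin s X l = Min ((\<lambda>j. X (l,j)) ` {..<s l})"

definition cnt :: "nat \<Rightarrow> (nat \<Rightarrow> nat) \<Rightarrow> real \<Rightarrow> real \<Rightarrow> (nat \<times> nat \<Rightarrow> real) \<Rightarrow> nat \<Rightarrow> nat" where
  "cnt b s \<alpha> c X k = card {l. l < b \<and> c * rowmin s X l \<le> real k * \<alpha>}"

definition Bv :: "nat \<Rightarrow> (nat \<Rightarrow> nat) \<Rightarrow> real \<Rightarrow> real \<Rightarrow> (nat \<times> nat \<Rightarrow> real) \<Rightarrow> nat" where
  "Bv b s \<alpha> c X = (if bstar_set b s \<alpha> c X = {} then 0 else Max (bstar_set b s \<alpha> c X))"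

definition Dv :: "nat \<Rightarrow> (nat \<Rightarrow> nat) \<Rightarrow> real \<Rightarrow> real \<Rightarrow> (nat \<times> nat \<Rightarrow> real) \<Rightarrow> nat" where
  "Dv b s \<alpha> c X = max 1 (Bv b s \<alpha> c X)"

lemma ntot_pos: assumes "b \<ge> 1" "\<forall>i<b. s i \<ge> 1" shows "ntot b s > 0"
proof -
  have "s 0 \<le> (\<Sum>i<b. s i)"
    using assms by (intro member_le_sum) auto
  then show ?thesis using assms unfolding ntot_def by fastforce
qed

lemma qtil_eq: assumes "b \<ge> 1" "ntot b s > 0"
  shows "qtil b s c X l = c / real b * rowmin s X l"
  using assms unfolding qtil_def pihat_def rowmin_def by (simp add: field_simps)

lemma qtil_le_iff: assumes "b \<ge> 1" "ntot b s > 0"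
  shows "qtil b s c X l \<le> real k * \<alpha> / real b \<longleftrightarrow> c * rowmin s X l \<le> real k * \<alpha>"
proof -
  have "qtil b s c X l = (c * rowmin s X l) / real b" using qtil_eq[OF assms] by simp
  moreover have "real b > 0" using assms by simp
  ultimately show ?thesis by (simp add: divide_le_cancel)
qed

lemma bstar_char: assumes "b \<ge> 1" "ntot b s > 0"
  shows "k \<in> bstar_set b s \<alpha> c X \<longleftrightarrow> 1 \<le> k \<and> k \<le> b \<and> k \<le> cnt b s \<alpha> c X k"
proof -
  have eq: "card {l. l < b \<and> qtil b s c X l \<le> real k * \<alpha> / real b} = cnt b s \<alpha> c X k"
    unfolding cnt_def using qtil_le_iff[OF assms, of c X _ k \<alpha>] by (intro arg_cong[where f=card] Collect_cong) simp
  show ?thesis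
  proof (cases "1 \<le> k \<and> k \<le> b")
    case True
    then show ?thesis unfolding bstar_set_def qtil_ord_def
      using sort_kth_le[of k b "qtil b s c X" "real k * \<alpha> / real b"] eq by simp
  next
    case False
    then show ?thesis unfolding bstar_set_def by auto
  qed
qed

lemma bstar_fin: "finite (bstar_set b s \<alpha> c X)"
  unfolding bstar_set_def by auto

lemma rowmin_attained: assumes "s l \<ge> 1"
  shows "\<exists>j<s l. X (l,j) = rowmin s X l"
proof -
  have "rowmin s X l \<in> (\<lambda>j. X (l,j)) ` {..<s l}"
    unfolding rowmin_def using assms by (intro Min_in) (auto simp: lessThan_empty_iff)
  then show ?thesis by auto
qed

lemma rowmin_le: assumes "j < s l" shows "rowmin s X l \<le> X (l,j)"
  unfolding rowmin_def using assms by (intro Min_le) auto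

lemma finite_idx: "finite (idx b s)"
  unfolding idx_def by auto

lemma rej_ge:
  assumes b: "b \<ge> 1" and s: "\<forall>i<b. s i \<ge> 1" and ne: "bstar_set b s \<alpha> c X \<noteq> {}"
    and a: "\<alpha> \<ge> 0"
  shows "Max (bstar_set b s \<alpha> c X) \<le> num_rej b s \<alpha> c X"
proof -
  have n: "ntot b s > 0" using ntot_pos b s by blast
  define B where "B = Max (bstar_set b s \<alpha> c X)"
  have Bin: "B \<in> bstar_set b s \<alpha> c X" unfolding B_def using ne bstar_fin by (rule Max_in[rotated])
  have Bmax: "k \<le> B" if "k \<in> bstar_set b s \<alpha> c X" for k unfolding B_def using bstar_fin that by (rule Max_ge)
  have Bc: "1 \<le> B \<and> B \<le> b \<and> B \<le> cnt b s \<alpha> c X B" using Bin bstar_char[OF b n] by blast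
  have key: "qtil b s c X l \<le> qtil_ord b s c X B" if l: "l < b" "c * rowmin s X l \<le> real B * \<alpha>" for l
  proof (rule ccontr)
    assume nt: "\<not> qtil b s c X l \<le> qtil_ord b s c X B"
    let ?q = "qtil b s c X"
    let ?th = "sort (map ?q [0..<b]) ! (B - 1)"
    have lt: "?th < ?q l" using nt unfolding qtil_ord_def by simp
    have NB: "B \<le> card {m. m < b \<and> ?q m \<le> ?th}"
      using sort_kth_le[of B b ?q ?th] Bc by simp
    have sub: "insert l {m. m < b \<and> ?q m \<le> ?th} \<subseteq> {m. m < b \<and> ?q m \<le> ?q l}"
      using lt l(1) by auto
    have fin1: "finite {m. m < b \<and> ?q m \<le> ?th}" by simp
    have nin: "l \<notin> {m. m < b \<and> ?q m \<le> ?th}" using lt by simp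
    have "card (insert l {m. m < b \<and> ?q m \<le> ?th}) = Suc (card {m. m < b \<and> ?q m \<le> ?th})"
      using card_insert_disjoint[OF fin1 nin] .
    moreover have "card (insert l {m. m < b \<and> ?q m \<le> ?th}) \<le> card {m. m < b \<and> ?q m \<le> ?q l}"
      by (rule card_mono[OF _ sub]) simp
    ultimately have N1: "B + 1 \<le> card {m. m < b \<and> ?q m \<le> ?q l}" using NB by linarith
    have "{m. m < b \<and> ?q m \<le> ?q l} \<subseteq> {..<b}" by auto
    then have "card {m. m < b \<and> ?q m \<le> ?q l} \<le> b"
      by (metis card_lessThan card_mono finite_lessThan)
    then have Bb: "B + 1 \<le> b" using N1 by linarith
    have o: "qtil_ord b s c X (B+1) \<le> ?q l"
      using sort_kth_le[of "B+1" b ?q "?q l"] N1 Bb unfolding qtil_ord_def by simp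
    have "?q l \<le> real B * \<alpha> / real b" using qtil_le_iff[OF b n] l(2) by simp
    also have "\<dots> \<le> real (B+1) * \<alpha> / real b" using a b
      by (intro divide_right_mono mult_right_mono) auto
    finally have "qtil_ord b s c X (B+1) \<le> real (B+1) * \<alpha> / real b" using o by linarith
    then have "B + 1 \<in> bstar_set b s \<alpha> c X" unfolding bstar_set_def using Bb by simp
    then show False using Bmax[of "B+1"] by simp
  qed
  define Rows where "Rows = {l. l < b \<and> c * rowmin s X l \<le> real B * \<alpha>}"
  define jj where "jj = (\<lambda>l. SOME j. j < s l \<and> X (l,j) = rowmin s X l)"
  have jj: "jj l < s l \<and> X (l, jj l) = rowmin s X l" if "l < b" for l
  proof -
    have "\<exists>j. j < s l \<and> X (l,j) = rowmin s X l" using rowmin_attained[of s l X] s that by blast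
    then show ?thesis unfolding jj_def by (rule someI_ex)
  qed
  have img: "(\<lambda>l. (l, jj l)) ` Rows \<subseteq> {(i,j) \<in> idx b s. abh_rejects b s \<alpha> c X i j}"
  proof
    fix p assume "p \<in> (\<lambda>l. (l, jj l)) ` Rows"
    then obtain l where l: "l \<in> Rows" "p = (l, jj l)" by auto
    have lb: "l < b" "c * rowmin s X l \<le> real B * \<alpha>" using l Rows_def by auto
    have "abh_rejects b s \<alpha> c X l (jj l)"
      unfolding abh_rejects_def Let_def B_def[symmetric]
    proof (intro conjI ne)
      show "qtil b s c X l \<le> qtil_ord b s c X B" using key[OF lb] .
      have "pihat b s c * X (l, jj l) = c * rowmin s X l / real (ntot b s)"
        using jj[OF lb(1)] unfolding pihat_def by simp
      also have "\<dots> \<le> real B * \<alpha> / real (ntot b s)" using lb n by (intro divide_right_mono) auto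
      finally show "pihat b s c * X (l, jj l) \<le> real B * \<alpha> / real (ntot b s)" .
    qed
    moreover have "(l, jj l) \<in> idx b s" using jj[OF lb(1)] lb(1) by (simp add: idx_def)
    ultimately show "p \<in> {(i,j) \<in> idx b s. abh_rejects b s \<alpha> c X i j}"
      using l(2) by simp
  qed
  have "B \<le> card Rows" using Bc unfolding cnt_def Rows_def by blast
  also have "card Rows = card ((\<lambda>l. (l, jj l)) ` Rows)"
    by (rule card_image[symmetric]) (simp add: inj_on_def)
  also have "\<dots> \<le> num_rej b s \<alpha> c X"
    unfolding num_rej_def by (intro card_mono img finite_subset[OF _ finite_idx]) auto
  finally show ?thesis unfolding B_def .
qed


lemma Bv_le_b: "Bv b s \<alpha> c X \<le> b"
proof (cases "bstar_set b s \<alpha> c X = {}")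
  case False
  then have "Max (bstar_set b s \<alpha> c X) \<in> bstar_set b s \<alpha> c X" using bstar_fin by (intro Max_in) auto
  then have "Max (bstar_set b s \<alpha> c X) \<in> {1..b}" unfolding bstar_set_def by blast
  then show ?thesis using False unfolding Bv_def by simp
qed (simp add: Bv_def)

lemma Dv_range: "b \<ge> 1 \<Longrightarrow> 1 \<le> Dv b s \<alpha> c X \<and> Dv b s \<alpha> c X \<le> b"
  unfolding Dv_def using Bv_le_b[of b s \<alpha> c X] by auto

lemma fdr_pointwise:
  assumes b: "b \<ge> 1" and s: "\<forall>i<b. s i \<ge> 1" and a: "\<alpha> \<ge> 0"
  shows "real (num_false_rej b s tn \<alpha> c X) / real (max (num_rej b s \<alpha> c X) 1)
     \<le> (\<Sum>p\<in>{(i,j). (i,j) \<in> idx b s \<and> tn i j}.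
           (if c * X p \<le> real (Dv b s \<alpha> c X) * \<alpha> then 1 / real (Dv b s \<alpha> c X) else 0))"
    (is "?L \<le> (\<Sum>p\<in>?T. ?g p)")
proof (cases "bstar_set b s \<alpha> c X = {}")
  case True
  then have "num_false_rej b s tn \<alpha> c X = 0"
    unfolding num_false_rej_def abh_rejects_def by simp
  then have "?L = 0" by simp
  also have "0 \<le> (\<Sum>p\<in>?T. ?g p)" by (intro sum_nonneg) auto
  finally show ?thesis .
next
  case ne: False
  have n: "ntot b s > 0" using ntot_pos b s by blast
  define B where "B = Max (bstar_set b s \<alpha> c X)"
  have Bin: "B \<in> bstar_set b s \<alpha> c X" unfolding B_def using ne bstar_fin by (rule Max_in[rotated])
  have B1: "1 \<le> B" using Bin bstar_char[OF b n] by auto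
  have DB: "Dv b s \<alpha> c X = B" unfolding Dv_def Bv_def B_def[symmetric] using ne B1 by auto
  have RB: "B \<le> num_rej b s \<alpha> c X" unfolding B_def using rej_ge[OF b s ne a] .
  define S where "S = {(i,j). (i,j) \<in> idx b s \<and> tn i j \<and> abh_rejects b s \<alpha> c X i j}"
  have Veq: "num_false_rej b s tn \<alpha> c X = card S"
    unfolding num_false_rej_def S_def by (rule arg_cong[where f=card]) auto
  have rej: "c * X p \<le> real B * \<alpha>" if "p \<in> S" for p
  proof -
    obtain i j where p: "p = (i,j)" by (cases p)
    have "abh_rejects b s \<alpha> c X i j" using that unfolding S_def p by simp
    then have "pihat b s c * X (i,j) \<le> real B * \<alpha> / real (ntot b s)"
      unfolding abh_rejects_def Let_def B_def by simp
    then have "c * X (i,j) / real (ntot b s) \<le> real B * \<alpha> / real (ntot b s)"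
      unfolding pihat_def by simp
    then show ?thesis using n p by (simp add: divide_right_mono_neg divide_le_cancel)
  qed
  have finT: "finite ?T"
    by (rule finite_subset[OF _ finite_idx]) auto
  have ST: "S \<subseteq> ?T" unfolding S_def by auto
  have "?L \<le> real (card S) / real B"
    unfolding Veq using B1 RB by (intro divide_left_mono) auto
  also have "\<dots> = (\<Sum>p\<in>S. 1 / real B)" by simp
  also have "\<dots> = (\<Sum>p\<in>S. ?g p)" using rej DB by (intro sum.cong) auto
  also have "\<dots> \<le> (\<Sum>p\<in>?T. ?g p)" using finT ST by (intro sum_mono2) auto
  finally show ?thesis .
qed

lemma Dv_mono:
  assumes b: "b \<ge> 1" and s: "\<forall>i<b. s i \<ge> 1" and c: "0 \<le> c'" "c' \<le> c"
    and X: "\<forall>p\<in>idx b s. 0 \<le> X' p \<and> X' p \<le> X p"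
  shows "Dv b s \<alpha> c X \<le> Dv b s \<alpha> c' X'"
proof -
  have n: "ntot b s > 0" using ntot_pos b s by blast
  have rm: "0 \<le> rowmin s X' l \<and> rowmin s X' l \<le> rowmin s X l" if l: "l < b" for l
  proof -
    obtain j where j: "j < s l" "X (l,j) = rowmin s X l" using rowmin_attained s l by blast
    obtain j' where j': "j' < s l" "X' (l,j') = rowmin s X' l" using rowmin_attained s l by blast
    have lj: "(l,j) \<in> idx b s" "(l,j') \<in> idx b s" using j j' l by (auto simp: idx_def)
    have "X' (l,j) \<le> X (l,j)" "0 \<le> X' (l,j')" using X lj by auto
    moreover have "rowmin s X' l \<le> X' (l,j)" using rowmin_le j by blast
    ultimately show ?thesis using j j' by linarith
  qed
  have cm: "cnt b s \<alpha> c X k \<le> cnt b s \<alpha> c' X' k" for k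
  proof -
    have "{l. l < b \<and> c * rowmin s X l \<le> real k * \<alpha>} \<subseteq> {l. l < b \<and> c' * rowmin s X' l \<le> real k * \<alpha>}"
    proof safe
      fix l assume l: "l < b" "c * rowmin s X l \<le> real k * \<alpha>"
      have "c' * rowmin s X' l \<le> c * rowmin s X l" using rm[OF l(1)] c by (intro mult_mono) auto
      then show "c' * rowmin s X' l \<le> real k * \<alpha>" using l by linarith
    qed
    then show ?thesis unfolding cnt_def by (intro card_mono) auto
  qed
  have sub: "bstar_set b s \<alpha> c X \<subseteq> bstar_set b s \<alpha> c' X'"
  proof
    fix k assume "k \<in> bstar_set b s \<alpha> c X"
    then have "1 \<le> k \<and> k \<le> b \<and> k \<le> cnt b s \<alpha> c X k" using bstar_char[OF b n] by simp
    then have "1 \<le> k \<and> k \<le> b \<and> k \<le> cnt b s \<alpha> c' X' k" using cm[of k] by linarith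
    then show "k \<in> bstar_set b s \<alpha> c' X'" using bstar_char[OF b n] by simp
  qed
  have "Bv b s \<alpha> c X \<le> Bv b s \<alpha> c' X'"
  proof (cases "bstar_set b s \<alpha> c X = {}")
    case False
    then have "bstar_set b s \<alpha> c' X' \<noteq> {}" using sub by auto
    then show ?thesis unfolding Bv_def using False Max_mono[OF sub False bstar_fin] by simp
  qed (simp add: Bv_def)
  then show ?thesis unfolding Dv_def by simp
qed

lemma abel_bound:
  fixes w H :: "nat \<Rightarrow> real"
  assumes wdec: "\<And>k. 1 \<le> k \<Longrightarrow> w (Suc k) \<le> w k" and wpos: "\<And>k. 0 \<le> w k"
    and H1: "\<And>k. H k \<le> 1" and H0: "H 0 = 0"
  shows "n \<ge> 1 \<Longrightarrow> (\<Sum>k=1..n. w k * (H k - H (k - 1))) \<le> w 1 - w n * (1 - H n)"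
proof (induction n rule: dec_induct[where i=1])
  case base then show ?case using H0 by (simp add: algebra_simps)
next
  case (step n)
  have "(\<Sum>k=1..Suc n. w k * (H k - H (k - 1))) = (\<Sum>k=1..n. w k * (H k - H (k - 1))) + w (Suc n) * (H (Suc n) - H n)"
    using step by simp
  also have "\<dots> \<le> w 1 - w n * (1 - H n) + w (Suc n) * (H (Suc n) - H n)" using step by simp
  also have "\<dots> \<le> w 1 - w (Suc n) * (1 - H (Suc n))"
  proof -
    have "(w n - w (Suc n)) * H n \<le> (w n - w (Suc n)) * 1"
      using wdec[of n] step H1[of n] by (intro mult_left_mono) auto
    then show ?thesis by (simp add: algebra_simps)
  qed
  finally show ?case .
qed

lemma abel_bound':
  fixes w H :: "nat \<Rightarrow> real"
  assumes wdec: "\<And>k. 1 \<le> k \<Longrightarrow> w (Suc k) \<le> w k" and wpos: "\<And>k. 0 \<le> w k"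
    and H1: "\<And>k. H k \<le> 1" and H0: "H 0 = 0" and n: "n \<ge> 1"
  shows "(\<Sum>k=1..n. w k * (H k - H (k - 1))) \<le> w 1"
proof -
  have "0 \<le> w n * (1 - H n)" using wpos H1 by simp
  moreover have "(\<Sum>k=1..n. w k * (H k - H (k - 1))) \<le> w 1 - w n * (1 - H n)"
    by (rule abel_bound[of w H n, OF wdec wpos H1 H0 n])
  ultimately show ?thesis by linarith
qed

lemma prds:
  fixes \<mu> :: "'b measure" and Z :: "'b \<Rightarrow> real" and D :: "'b \<Rightarrow> nat"
  assumes P: "prob_space \<mu>"
    and Zm: "Z \<in> borel_measurable \<mu>" and Z01: "\<forall>x\<in>space \<mu>. 0 \<le> Z x \<and> Z x \<le> 1"
    and unifZ: "\<And>u. 0 \<le> u \<Longrightarrow> u \<le> 1 \<Longrightarrow> measure \<mu> {x\<in>space \<mu>. Z x \<le> u} = u"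
    and Dm: "\<And>k. {x\<in>space \<mu>. D x \<le> k} \<in> sets \<mu>"
    and Dr: "\<And>x. 1 \<le> D x \<and> D x \<le> b"
    and pd: "\<And>k. mono_on {0<..<1} (\<lambda>u. measure \<mu> {x\<in>space \<mu>. D x \<le> k \<and> Z x \<le> u} / measure \<mu> {x\<in>space \<mu>. Z x \<le> u})"
    and t: "t > 0"
  shows "(\<integral>\<^sup>+ x. ennreal (if Z x \<le> real (D x) * t then 1 / real (D x) else 0) \<partial>\<mu>) \<le> ennreal t"
proof -
  interpret prob_space \<mu> by (rule P)
  have b: "b \<ge> 1" using Dr[of undefined] by auto
  define A where "A = (\<lambda>k u. {x\<in>space \<mu>. D x \<le> k \<and> Z x \<le> u})"
  define a where "a = (\<lambda>k u. measure \<mu> (A k u))"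
  define m where "m = (\<lambda>u::real. min u 1)"
  have Zs: "{x\<in>space \<mu>. Z x \<le> u} \<in> sets \<mu>" for u using Zm by measurable
  have As: "A k u \<in> sets \<mu>" for k u
  proof -
    have "A k u = {x\<in>space \<mu>. D x \<le> k} \<inter> {x\<in>space \<mu>. Z x \<le> u}" unfolding A_def by auto
    then show ?thesis using Dm Zs by auto
  qed
  have pZ: "measure \<mu> {x\<in>space \<mu>. Z x \<le> u} = m u" if "u > 0" for u
  proof (cases "u \<le> 1")
    case True then show ?thesis using unifZ that unfolding m_def by auto
  next
    case False
    then have "{x\<in>space \<mu>. Z x \<le> u} = space \<mu>" using Z01 by force
    then show ?thesis using False unfolding m_def by (simp add: prob_space)
  qed
  have a_le: "a k u \<le> m u" if "u > 0" for k u
  proof -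
    have "a k u \<le> measure \<mu> {x\<in>space \<mu>. Z x \<le> u}" unfolding a_def A_def
      using Zs by (intro finite_measure_mono) auto
    then show ?thesis using pZ that by simp
  qed
  have a_nn: "0 \<le> a k u" for k u unfolding a_def by simp
  define G where "G = (\<lambda>k u. a k u / m u)"
  have m_pos: "u > 0 \<Longrightarrow> m u > 0" for u unfolding m_def by simp
  have G01: "0 \<le> G k u \<and> G k u \<le> 1" if "u > 0" for k u
    unfolding G_def using a_le[OF that, of k] a_nn[of k u] m_pos[OF that] by (simp add: divide_simps)
  have Gpd: "G k u \<le> G k v" if "0 < u" "u \<le> v" "v < 1" for k u v
  proof -
    have "G k u = a k u / measure \<mu> {x\<in>space \<mu>. Z x \<le> u}" using pZ that unfolding G_def by simp
    also have "\<dots> \<le> a k v / measure \<mu> {x\<in>space \<mu>. Z x \<le> v}"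
      using pd[of k] that unfolding a_def A_def by (auto elim!: mono_onD)
    also have "\<dots> = G k v" using pZ that unfolding G_def by simp
    finally show ?thesis .
  qed
  define p where "p = (\<lambda>k. measure \<mu> {x\<in>space \<mu>. D x \<le> k})"
  have G_ge1: "G k u = p k" if "u \<ge> 1" for k u
  proof -
    have "A k u = {x\<in>space \<mu>. D x \<le> k}" using Z01 that unfolding A_def by force
    then show ?thesis unfolding G_def a_def p_def m_def using that by simp
  qed
  have G_le_p: "G k u \<le> p k" if u: "0 < u" "u < 1" for k u
  proof -
    have pos: "0 \<le> G k u" using G01 u by auto
    have "z * G k u \<le> p k" if z: "0 < z" "z < 1" for z
    proof -
      define v where "v = max z ((u + 1) / 2)"
      have v: "u \<le> v" "v < 1" "z \<le> v" "0 < v" using u z unfolding v_def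
        by (simp_all add: le_max_iff_disj less_max_iff_disj)
      have "z * G k u \<le> v * G k u" using v pos by (intro mult_right_mono) auto
      also have "\<dots> \<le> v * G k v" using Gpd[of u v k] v u by (intro mult_left_mono) auto
      also have "\<dots> = a k v" unfolding G_def m_def using v by simp
      also have "\<dots> \<le> p k" unfolding a_def p_def A_def using Dm by (intro finite_measure_mono) auto
      finally show ?thesis .
    qed
    then show ?thesis by (rule field_le_mult_one_interval)
  qed
  have Gmono: "G k u \<le> G k v" if "0 < u" "u \<le> v" for k u v
  proof (cases "v < 1")
    case True then show ?thesis using Gpd that by auto
  next
    case False
    then have "G k v = p k" using G_ge1 by auto
    moreover have "G k u \<le> p k" using G_le_p[of u k] G_ge1[of u k] that by (cases "u < 1") auto
    ultimately show ?thesis by simp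
  qed
  define E where "E = (\<lambda>k. {x\<in>space \<mu>. D x = k \<and> Z x \<le> real k * t})"
  have Es: "E k \<in> sets \<mu>" for k
  proof -
    have "E k = A k (real k * t) - A (k - 1) (real k * t) \<or> k = 0"
      unfolding E_def A_def by auto
    moreover have "E 0 = {}" unfolding E_def using Dr by (metis (mono_tags, lifting) Collect_empty_eq not_one_le_zero)
    ultimately show ?thesis using As by (cases "k = 0") auto
  qed
  have Emeas: "measure \<mu> (E k) = a k (real k * t) - a (k - 1) (real k * t)" if "k \<ge> 1" for k
  proof -
    have "E k = A k (real k * t) - A (k - 1) (real k * t)" unfolding E_def A_def using that by auto
    moreover have "A (k - 1) (real k * t) \<subseteq> A k (real k * t)" unfolding A_def by auto
    ultimately show ?thesis unfolding a_def using As by (simp add: finite_measure_Diff)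
  qed
  have pw: "ennreal (if Z x \<le> real (D x) * t then 1 / real (D x) else 0)
      = (\<Sum>k\<in>{1..b}. ennreal (1 / real k) * indicator (E k) x)" if x: "x \<in> space \<mu>" for x
  proof -
    have "(\<Sum>k\<in>{1..b}. ennreal (1 / real k) * indicator (E k) x)
        = (\<Sum>k\<in>{1..b}. if k = D x then ennreal (if Z x \<le> real (D x) * t then 1 / real (D x) else 0) else 0)"
      by (intro sum.cong) (auto simp: E_def indicator_def x)
    also have "\<dots> = ennreal (if Z x \<le> real (D x) * t then 1 / real (D x) else 0)"
      using Dr[of x] by (simp add: sum.delta)
    finally show ?thesis by simp
  qed
  have "(\<integral>\<^sup>+ x. ennreal (if Z x \<le> real (D x) * t then 1 / real (D x) else 0) \<partial>\<mu>)
      = (\<integral>\<^sup>+ x. (\<Sum>k\<in>{1..b}. ennreal (1 / real k) * indicator (E k) x) \<partial>\<mu>)"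
    using pw by (intro nn_integral_cong) auto
  also have "\<dots> = (\<Sum>k\<in>{1..b}. ennreal (1 / real k) * emeasure \<mu> (E k))"
    using Es by (subst nn_integral_sum) (auto simp: nn_integral_cmult_indicator)
  also have "\<dots> = (\<Sum>k\<in>{1..b}. ennreal (1 / real k * measure \<mu> (E k)))"
    by (intro sum.cong refl, unfold emeasure_eq_measure, rule ennreal_mult[symmetric]) auto
  also have "\<dots> = ennreal (\<Sum>k\<in>{1..b}. 1 / real k * measure \<mu> (E k))"
    by (intro sum_ennreal) auto
  also have "\<dots> \<le> ennreal t"
  proof (intro ennreal_leI)
    define w where "w = (\<lambda>k::nat. m (real k * t) / real k)"
    define H where "H = (\<lambda>k. if k = 0 then 0 else G k (real k * t))"
    have tm: "1 / real k * measure \<mu> (E k) \<le> w k * (H k - H (k - 1))" if k: "1 \<le> k" for k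
    proof -
      have kt: "real k * t > 0" using k t by simp
      have ak: "a k (real k * t) = m (real k * t) * G k (real k * t)"
        unfolding G_def using m_pos[OF kt] by simp
      have ak1: "a (k - 1) (real k * t) \<ge> m (real k * t) * H (k - 1)"
      proof (cases "k = 1")
        case True
        then show ?thesis unfolding H_def using a_nn by simp
      next
        case False
        then have k1: "real (k - 1) * t > 0" using k t by simp
        have "G (k - 1) (real (k - 1) * t) \<le> G (k - 1) (real k * t)"
        proof (rule Gmono[OF k1])
          show "real (k - 1) * t \<le> real k * t" using t by (intro mult_right_mono) auto
        qed
        then have "m (real k * t) * H (k - 1) \<le> m (real k * t) * G (k - 1) (real k * t)"
          unfolding H_def using False k m_pos[OF kt] by (intro mult_left_mono) auto
        also have "\<dots> = a (k - 1) (real k * t)" unfolding G_def using m_pos[OF kt] by simp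
        finally show ?thesis .
      qed
      have "1 / real k * measure \<mu> (E k) = (a k (real k * t) - a (k - 1) (real k * t)) / real k"
        using Emeas[OF k] by simp
      also have "\<dots> \<le> (m (real k * t) * G k (real k * t) - m (real k * t) * H (k - 1)) / real k"
        using ak ak1 k by (intro divide_right_mono) auto
      also have "\<dots> = w k * (H k - H (k - 1))" unfolding w_def H_def using k by (simp add: field_simps)
      finally show ?thesis .
    qed
    have "(\<Sum>k\<in>{1..b}. 1 / real k * measure \<mu> (E k)) \<le> (\<Sum>k=1..b. w k * (H k - H (k - 1)))"
      using tm by (intro sum_mono) auto
    also have "\<dots> \<le> w 1"
    proof (rule abel_bound'[OF _ _ _ _ b])
      show "w (Suc k) \<le> w k" if "1 \<le> k" for k
      proof -
        have "w k = min t (1 / real k)" "w (Suc k) = min t (1 / real (Suc k))"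
          unfolding w_def m_def using that by (auto simp: min_def field_simps)
        moreover have "1 / real (Suc k) \<le> 1 / real k" using that by (intro divide_left_mono) auto
        ultimately show ?thesis by linarith
      qed
      show "0 \<le> w k" for k unfolding w_def m_def using t by auto
      show "H k \<le> 1" for k unfolding H_def using G01[of "real k * t"] t by auto
      show "H 0 = 0" unfolding H_def by simp
    qed
    also have "w 1 \<le> t" unfolding w_def m_def by simp
    finally show "(\<Sum>k\<in>{1..b}. 1 / real k * measure \<mu> (E k)) \<le> t" .
  qed
  finally show ?thesis .
qed

definition clamp :: "real \<Rightarrow> real" where "clamp v = max 0 (min 1 v)"

definition matof :: "nat \<Rightarrow> (nat \<Rightarrow> nat) \<Rightarrow> (nat \<Rightarrow> nat \<Rightarrow> real) \<Rightarrow> (nat \<times> nat \<Rightarrow> real)" where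
  "matof b s \<omega> = restrict (\<lambda>(k,l). clamp (\<omega> k l)) (idx b s)"

lemma clamp01: "0 \<le> clamp v \<and> clamp v \<le> 1" unfolding clamp_def by auto
lemma clamp_id: "0 \<le> v \<Longrightarrow> v \<le> 1 \<Longrightarrow> clamp v = v" unfolding clamp_def by auto
lemma clamp_mono: "v \<le> w \<Longrightarrow> clamp v \<le> clamp w" unfolding clamp_def by auto
lemma clamp_meas[measurable]: "clamp \<in> borel_measurable borel" unfolding clamp_def by measurable

lemma matof_PiE: "matof b s \<omega> \<in> PiE (idx b s) (\<lambda>_. {0..1})"
  unfolding matof_def using clamp01 by (auto simp: PiE_iff)

lemma matof_apply: "p \<in> idx b s \<Longrightarrow> matof b s \<omega> p = clamp (\<omega> (fst p) (snd p))"
  unfolding matof_def by (cases p) auto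

lemma n0_mono_multi:
  fixes n0hat :: "(nat \<times> nat \<Rightarrow> real) \<Rightarrow> real"
  assumes n0_mono: "\<forall>X\<in>PiE K (\<lambda>_. {0..1}). \<forall>(i,j)\<in>K. \<forall>t.
                    X (i,j) \<le> t \<and> t \<le> 1 \<longrightarrow> n0hat X \<le> n0hat (X((i,j) := t))"
    and fin: "finite K"
    and X: "X \<in> PiE K (\<lambda>_. {0..1})" and Y: "Y \<in> PiE K (\<lambda>_. {0..1})"
    and le: "\<forall>p\<in>K. X p \<le> Y p"
  shows "n0hat X \<le> n0hat Y"
proof -
  have main: "\<And>X. X \<in> PiE K (\<lambda>_. {0..1}) \<Longrightarrow> (\<forall>p\<in>K. X p \<le> Y p) \<Longrightarrow> {p\<in>K. X p \<noteq> Y p} \<subseteq> S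
      \<Longrightarrow> n0hat X \<le> n0hat Y" if S: "finite S" for S
    using S
  proof (induction S rule: finite_induct)
    case empty
    fix X assume X: "X \<in> PiE K (\<lambda>_. {0..1})" and "\<forall>p\<in>K. X p \<le> Y p" and d: "{p\<in>K. X p \<noteq> Y p} \<subseteq> {}"
    have "X = Y"
    proof (rule PiE_ext[OF X Y])
      fix p assume "p \<in> K" then show "X p = Y p" using d by (cases p) auto
    qed
    then show "n0hat X \<le> n0hat Y" by simp
  next
    case (insert q S)
    fix X assume X: "X \<in> PiE K (\<lambda>_. {0..1})" and leX: "\<forall>p\<in>K. X p \<le> Y p"
      and d: "{p\<in>K. X p \<noteq> Y p} \<subseteq> insert q S"
    show "n0hat X \<le> n0hat Y"
    proof (cases "q \<in> K")
      case False
      then have "{p\<in>K. X p \<noteq> Y p} \<subseteq> S" using d by auto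
      then show ?thesis using insert.IH X leX by blast
    next
      case True
      define X' where "X' = X(q := Y q)"
      have Yq: "Y q \<in> {0..1}" using Y True by (auto simp: PiE_iff)
      have X': "X' \<in> PiE K (\<lambda>_. {0..1})" unfolding X'_def using X True Yq by (auto simp: PiE_iff extensional_def)
      have leX': "\<forall>p\<in>K. X' p \<le> Y p" unfolding X'_def using leX by auto
      have dX': "{p\<in>K. X' p \<noteq> Y p} \<subseteq> S" unfolding X'_def using d by auto
      have "n0hat X' \<le> n0hat Y" using insert.IH X' leX' dX' by blast
      moreover have "n0hat X \<le> n0hat X'"
      proof -
        obtain i j where q: "q = (i,j)" by (cases q)
        have h: "X (i,j) \<le> Y q \<and> Y q \<le> 1" using leX True Yq q by auto
        have "\<forall>(i,j)\<in>K. \<forall>t. X (i,j) \<le> t \<and> t \<le> 1 \<longrightarrow> n0hat X \<le> n0hat (X((i,j) := t))"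
          using n0_mono X by blast
        then have "\<forall>t. X (i,j) \<le> t \<and> t \<le> 1 \<longrightarrow> n0hat X \<le> n0hat (X((i,j) := t))"
          using True q by blast
        then have "n0hat X \<le> n0hat (X((i,j) := Y q))" using h by blast
        then show ?thesis unfolding X'_def q .
      qed
      ultimately show ?thesis by linarith
    qed
  qed
  have "finite {p\<in>K. X p \<noteq> Y p}" using fin by auto
  then show ?thesis using main[of "{p\<in>K. X p \<noteq> Y p}" X] X le by blast
qed

lemma comp_meas:
  assumes g: "g \<in> measurable N (PiM K (\<lambda>_. borel))"
  shows "(\<lambda>x. g x p :: real) \<in> borel_measurable N"
proof (cases "p \<in> K")
  case True
  then show ?thesis using measurable_compose[OF g measurable_component_singleton[OF True]] by simp
next
  case False
  have "g x p = undefined" if "x \<in> space N" for x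
    using measurable_space[OF g that] False by (auto simp: space_PiM PiE_iff extensional_def)
  then show ?thesis by (subst measurable_cong[where g="\<lambda>_. undefined"]) auto
qed

lemma rowmin_meas:
  assumes g: "g \<in> measurable N (PiM K (\<lambda>_. borel))"
  shows "(\<lambda>x. rowmin s (g x) l) \<in> borel_measurable N"
  unfolding rowmin_def by (intro borel_measurable_Min comp_meas[OF g]) auto

lemma card_as_sum: "real (card {l. l < (b::nat) \<and> Q l}) = (\<Sum>l<b. if Q l then 1 else 0 :: real)"
proof (induction b)
  case 0 then show ?case by simp
next
  case (Suc b)
  have e: "{l. l < Suc b \<and> Q l} = (if Q b then insert b {l. l < b \<and> Q l} else {l. l < b \<and> Q l})"
    by (auto simp: less_Suc_eq)
  have f: "finite {l. l < b \<and> Q l}" by simp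
  show ?case
  proof (cases "Q b")
    case True
    then show ?thesis unfolding e using Suc f by (simp add: card_insert_if)
  next
    case False
    then show ?thesis unfolding e using Suc by simp
  qed
qed

lemma bstar_pred:
  assumes b: "b \<ge> 1" and s: "\<forall>i<b. s i \<ge> 1"
    and f: "f \<in> borel_measurable N" and g: "g \<in> measurable N (PiM (idx b s) (\<lambda>_. borel))"
  shows "Measurable.pred N (\<lambda>x. k \<in> bstar_set b s \<alpha> (f x) (g x))"
proof -
  have n: "ntot b s > 0" using ntot_pos b s by blast
  have eq: "k \<in> bstar_set b s \<alpha> (f x) (g x) \<longleftrightarrow>
     1 \<le> k \<and> k \<le> b \<and> real k \<le> (\<Sum>l<b. if f x * rowmin s (g x) l \<le> real k * \<alpha> then 1 else 0 :: real)" for x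
    unfolding bstar_char[OF b n] cnt_def card_as_sum[symmetric] by simp
  have t: "(\<lambda>x. f x * rowmin s (g x) l) \<in> borel_measurable N" for l
    by (intro borel_measurable_times f rowmin_meas[OF g])
  have t2: "(\<lambda>x. if f x * rowmin s (g x) l \<le> real k * \<alpha> then 1 else 0 :: real) \<in> borel_measurable N" for l
    by (intro measurable_If measurable_const borel_measurable_le t borel_measurable_const)
  have S: "(\<lambda>x. (\<Sum>l<b. if f x * rowmin s (g x) l \<le> real k * \<alpha> then 1 else 0 :: real)) \<in> borel_measurable N"
    by (intro borel_measurable_sum t2)
  have "{x \<in> space N. real k \<le> (\<Sum>l<b. if f x * rowmin s (g x) l \<le> real k * \<alpha> then 1 else 0 :: real)} \<in> sets N"
    by (intro borel_measurable_le S borel_measurable_const)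
  then show ?thesis unfolding eq Measurable.pred_def by (cases "1 \<le> k \<and> k \<le> b") auto
qed

lemma Bv_Max: "b \<ge> 1 \<Longrightarrow> \<forall>i<b. s i \<ge> 1 \<Longrightarrow> Bv b s \<alpha> c X = Max {k. k = 0 \<or> k \<in> bstar_set b s \<alpha> c X}"
proof -
  have e: "{k. k = 0 \<or> k \<in> bstar_set b s \<alpha> c X} = insert 0 (bstar_set b s \<alpha> c X)" by auto
  show ?thesis
  proof (cases "bstar_set b s \<alpha> c X = {}")
    case True then show ?thesis unfolding Bv_def e by simp
  next
    case False
    then show ?thesis unfolding Bv_def e using bstar_fin by (simp add: Max_insert)
  qed
qed

lemma Dv_meas:
  assumes b: "b \<ge> 1" and s: "\<forall>i<b. s i \<ge> 1"
    and f: "f \<in> borel_measurable N" and g: "g \<in> measurable N (PiM (idx b s) (\<lambda>_. borel))"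
  shows "(\<lambda>x. Dv b s \<alpha> (f x) (g x)) \<in> measurable N (count_space UNIV)"
proof -
  have pr: "Measurable.pred N (\<lambda>x. k = 0 \<or> k \<in> bstar_set b s \<alpha> (f x) (g x))" for k
  proof (cases "k = 0")
    case True then show ?thesis by simp
  next
    case False then show ?thesis using bstar_pred[OF b s f g, of k \<alpha>] by simp
  qed
  have m: "(\<lambda>x. Max {k. k = 0 \<or> k \<in> bstar_set b s \<alpha> (f x) (g x)}) \<in> measurable N (count_space UNIV)"
    by (rule measurable_Max_nat[OF pr])
  have "(\<lambda>x. max 1 (Max {k. k = 0 \<or> k \<in> bstar_set b s \<alpha> (f x) (g x)})) \<in> measurable N (count_space UNIV)"
    by (rule measurable_compose[OF m]) simp
  then show ?thesis unfolding Dv_def Bv_Max[OF b s] .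
qed

lemma entry_meas:
  assumes "k \<in> I" "l \<in> S k"
  shows "(\<lambda>\<omega>. \<omega> k l :: real) \<in> borel_measurable (PiM I (\<lambda>k. PiM (S k) (\<lambda>_. borel)))"
  using measurable_compose[OF measurable_component_singleton[of k I "\<lambda>k. PiM (S k) (\<lambda>_. borel)", OF assms(1)]
     measurable_component_singleton[of l "S k" "\<lambda>_. borel", OF assms(2)]]
  by simp

lemma idxD: "(k,l) \<in> idx b s \<Longrightarrow> k < b \<and> l < s k" unfolding idx_def by auto

lemma matof_meas:
  "(\<lambda>\<omega>. matof b s \<omega>) \<in> measurable (PiM {..<b} (\<lambda>k. PiM {..<s k} (\<lambda>_. borel))) (PiM (idx b s) (\<lambda>_. borel))"
  unfolding matof_def
proof (rule measurable_restrict)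
  fix p assume p: "p \<in> idx b s"
  obtain k l where kl: "p = (k,l)" by (cases p)
  have "k \<in> {..<b}" "l \<in> {..<s k}" using idxD p kl by auto
  then have "(\<lambda>\<omega>. clamp (\<omega> k l)) \<in> borel_measurable (PiM {..<b} (\<lambda>k. PiM {..<s k} (\<lambda>_. borel)))"
    using measurable_compose[OF entry_meas[where I="{..<b}" and S="\<lambda>k. {..<s k}"] clamp_meas] by blast
  then show "(\<lambda>\<omega>. case p of (k, l) \<Rightarrow> clamp (\<omega> k l)) \<in> borel_measurable (PiM {..<b} (\<lambda>k. PiM {..<s k} (\<lambda>_. borel)))"
    using kl by simp
qed

lemma matofz_meas:
  "(\<lambda>\<omega>. matof b s (fun_upd \<omega> i (\<lambda>_. 0))) \<in> measurable (PiM {..<b} (\<lambda>k. PiM {..<s k} (\<lambda>_. borel))) (PiM (idx b s) (\<lambda>_. borel))"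
  unfolding matof_def
proof (rule measurable_restrict)
  fix p assume p: "p \<in> idx b s"
  obtain k l where kl: "p = (k,l)" by (cases p)
  have kl2: "k \<in> {..<b}" "l \<in> {..<s k}" using idxD p kl by auto
  show "(\<lambda>\<omega>. case p of (k, l) \<Rightarrow> clamp ((fun_upd \<omega> i (\<lambda>_. 0)) k l)) \<in> borel_measurable (PiM {..<b} (\<lambda>k. PiM {..<s k} (\<lambda>_. borel)))"
  proof (cases "k = i")
    case True then show ?thesis using kl by simp
  next
    case False
    then have "(\<lambda>\<omega>. case p of (k, l) \<Rightarrow> clamp ((fun_upd \<omega> i (\<lambda>_. 0)) k l)) = (\<lambda>\<omega>. clamp (\<omega> k l))"
      using kl by auto
    then show ?thesis using measurable_compose[OF entry_meas[where I="{..<b}" and S="\<lambda>k. {..<s k}", OF kl2] clamp_meas] by simp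
  qed
qed

theorem theorem1:
  fixes M :: "'a measure" and b :: nat and s :: "nat \<Rightarrow> nat"
    and P :: "nat \<Rightarrow> nat \<Rightarrow> 'a \<Rightarrow> real"
    and truenull :: "nat \<Rightarrow> nat \<Rightarrow> bool"
    and n0hat :: "(nat \<times> nat \<Rightarrow> real) \<Rightarrow> real"
    and \<alpha> :: real
  assumes M: "prob_space M"
    and b: "b \<ge> 1" and s: "\<forall>i<b. s i \<ge> 1"
    and alpha: "0 < \<alpha>" "\<alpha> < 1"
    and meas: "\<forall>i<b. \<forall>j<s i. P i j \<in> borel_measurable M"
    and pval: "\<forall>w\<in>space M. \<forall>i<b. \<forall>j<s i. 0 \<le> P i j w \<and> P i j w \<le> 1"
    and unif: "\<forall>i<b. \<forall>j<s i. truenull i j \<longrightarrow>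
                 distr M lborel (P i j) = uniform_measure lborel {0..1}"
    and indep: "prob_space.indep_vars M (\<lambda>i. PiM {..<s i} (\<lambda>_. borel)) (prow s P) {..<b}"
    and posdep: "\<forall>i<b. \<forall>j<s i. truenull i j \<longrightarrow>
                 (\<forall>\<phi> :: (nat \<Rightarrow> real) \<Rightarrow> real.
                    \<phi> \<in> borel_measurable (PiM {..<s i} (\<lambda>_. borel)) \<longrightarrow>
                    (\<forall>x y. (\<forall>k<s i. x k \<le> y k) \<longrightarrow> \<phi> x \<le> \<phi> y) \<longrightarrow>
                    integrable M (\<lambda>w. \<phi> (prow s P i w)) \<longrightarrow>
                    mono_on {0<..<1} (cexp_le M (\<lambda>w. \<phi> (prow s P i w)) (P i j)))"
    and n0_meas: "n0hat \<in> borel_measurable (PiM (idx b s) (\<lambda>_. borel))"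
    and n0_pos: "\<forall>X\<in>PiE (idx b s) (\<lambda>_. {0..1}). n0hat X > 0"
    and n0_mono: "\<forall>X\<in>PiE (idx b s) (\<lambda>_. {0..1}). \<forall>(i,j)\<in>idx b s. \<forall>t.
                    X (i,j) \<le> t \<and> t \<le> 1 \<longrightarrow> n0hat X \<le> n0hat (X((i,j) := t))"
    and n0_du: "(\<Sum>i<b. \<Sum>j<s i. (if truenull i j then 1 else 0) *
                   (\<integral>\<^sup>+ w. ennreal (1 / n0hat (du_mat b s truenull P i w)) \<partial>M)) \<le> 1"
  shows "abh_fdr M b s truenull \<alpha> n0hat P \<le> \<alpha>"
proof -
  interpret M: prob_space M by (rule M)
  have n: "ntot b s > 0" using ntot_pos b s by blast
  define Mrow :: "nat \<Rightarrow> (nat \<Rightarrow> real) measure" where "Mrow = (\<lambda>l. PiM {..<s l} (\<lambda>_. borel))"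
  have prow_meas: "prow s P l \<in> measurable M (Mrow l)" if "l < b" for l
    unfolding prow_def Mrow_def using meas that by (intro measurable_restrict) auto
  define z0 :: "nat \<Rightarrow> nat \<Rightarrow> real" where "z0 = (\<lambda>l. restrict (\<lambda>_. 0) {..<s l})"
  define \<mu>' where "\<mu>' = (\<lambda>l. if l < b then distr M (Mrow l) (prow s P l) else return (Mrow l) (z0 l))"
  have sets_mu': "sets (\<mu>' l) = sets (Mrow l)" for l unfolding \<mu>'_def by auto
  have prob_mu': "prob_space (\<mu>' l)" for l
  proof (cases "l < b")
    case True then show ?thesis unfolding \<mu>'_def using prow_meas by (auto intro!: M.prob_space_distr)
  next
    case False
    have "z0 l \<in> space (Mrow l)" unfolding z0_def Mrow_def by (auto simp: space_PiM)
    then show ?thesis unfolding \<mu>'_def using False by (auto intro!: prob_space_return)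
  qed
  interpret PS: product_sigma_finite \<mu>'
    unfolding product_sigma_finite_def using prob_mu' prob_space_imp_sigma_finite by blast
  define Y where "Y = (\<lambda>w. \<lambda>l\<in>{..<b}. prow s P l w)"
  have Y_meas: "Y \<in> measurable M (PiM {..<b} Mrow)" unfolding Y_def using prow_meas by (intro measurable_restrict) auto
  have distrY: "distr M (PiM {..<b} Mrow) Y = PiM {..<b} \<mu>'"
  proof -
    have i2: "prob_space.indep_vars M Mrow (prow s P) {..<b}" using indep unfolding Mrow_def .
    have "distr M (PiM {..<b} Mrow) Y = PiM {..<b} (\<lambda>l. distr M (Mrow l) (prow s P l))"
    proof -
      have ne: "{..<b} \<noteq> {}" using b by (auto simp: lessThan_empty_iff)
      show ?thesis
        unfolding Y_def using M.indep_vars_iff_distr_eq_PiM'[where I="{..<b}" and M'=Mrow and X="prow s P", OF ne] i2 prow_meas by auto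
    qed
    also have "\<dots> = PiM {..<b} \<mu>'" by (intro PiM_cong) (auto simp: \<mu>'_def)
    finally show ?thesis .
  qed
  have sets_PiM': "sets (PiM {..<b} \<mu>') = sets (PiM {..<b} Mrow)" by (intro sets_PiM_cong) (auto simp: sets_mu')

  have space_mu': "space (\<mu>' l) = space (Mrow l)" for l using sets_mu' by (rule sets_eq_imp_space_eq)
  have matof_meas': "(\<lambda>\<omega>. matof b s \<omega>) \<in> measurable (PiM {..<b} Mrow) (PiM (idx b s) (\<lambda>_. borel))"
    using matof_meas unfolding Mrow_def .
  have matofz_meas': "(\<lambda>\<omega>. matof b s (fun_upd \<omega> i (\<lambda>_. 0))) \<in> measurable (PiM {..<b} Mrow) (PiM (idx b s) (\<lambda>_. borel))" for i
    using matofz_meas unfolding Mrow_def .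
  define cf where "cf = (\<lambda>\<omega>. n0hat (matof b s \<omega>))"
  define ci where "ci = (\<lambda>i \<omega>. n0hat (matof b s (fun_upd \<omega> i (\<lambda>_. 0))))"
  define Df where "Df = (\<lambda>\<omega>. Dv b s \<alpha> (cf \<omega>) (matof b s \<omega>))"
  define Fr where "Fr = (\<lambda>p \<omega>. if ci (fst p) \<omega> * matof b s \<omega> p \<le> real (Df \<omega>) * \<alpha> then 1 / real (Df \<omega>) else 0)"
  have cf_meas: "cf \<in> borel_measurable (PiM {..<b} Mrow)"
    unfolding cf_def using measurable_compose[OF matof_meas' n0_meas] .
  have ci_meas: "ci i \<in> borel_measurable (PiM {..<b} Mrow)" for i
    unfolding ci_def using measurable_compose[OF matofz_meas' n0_meas] .
  have Df_meas: "Df \<in> measurable (PiM {..<b} Mrow) (count_space UNIV)"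
    unfolding Df_def by (rule Dv_meas[OF b s cf_meas matof_meas'])
  have Dfr_meas: "(\<lambda>\<omega>. real (Df \<omega>)) \<in> borel_measurable (PiM {..<b} Mrow)"
  proof -
    have "(real :: nat \<Rightarrow> real) \<in> measurable (count_space UNIV) borel" by (rule borel_measurable_count_space)
    from measurable_compose[OF Df_meas this] show ?thesis .
  qed
  have Fr_meas: "Fr p \<in> borel_measurable (PiM {..<b} Mrow)" for p
  proof -
    have m1: "(\<lambda>\<omega>. ci (fst p) \<omega> * matof b s \<omega> p) \<in> borel_measurable (PiM {..<b} Mrow)"
      by (intro borel_measurable_times ci_meas comp_meas[OF matof_meas'])
    have m2: "(\<lambda>\<omega>. real (Df \<omega>) * \<alpha>) \<in> borel_measurable (PiM {..<b} Mrow)"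
      by (intro borel_measurable_times Dfr_meas borel_measurable_const)
    have m3: "(\<lambda>\<omega>. 1 / real (Df \<omega>)) \<in> borel_measurable (PiM {..<b} Mrow)"
      by (intro borel_measurable_divide Dfr_meas borel_measurable_const)
    show ?thesis unfolding Fr_def
      by (intro measurable_If m3 borel_measurable_const borel_measurable_le m1 m2)
  qed
  have Fr_nn: "0 \<le> Fr p \<omega>" for p \<omega> unfolding Fr_def by auto
  have prow_apply: "prow s P k w l = P k l w" if "l < s k" for k l w
    unfolding prow_def using that by simp
  have pmatY: "pmat b s P w = matof b s (Y w)" if w: "w \<in> space M" for w
    unfolding pmat_def matof_def
  proof (rule restrict_ext)
    fix q assume q: "q \<in> idx b s"
    obtain k l where kl: "q = (k,l)" by (cases q)
    have kl2: "k < b" "l < s k" using idxD q kl by auto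
    then have "clamp (Y w k l) = P k l w"
      unfolding Y_def using prow_apply[OF kl2(2)] pval w by (auto intro!: clamp_id)
    then show "(case q of (i, j) \<Rightarrow> P i j w) = (case q of (k, l) \<Rightarrow> clamp (Y w k l))" using kl by simp
  qed
  have ci_le_cf: "ci i \<omega> \<le> cf \<omega>" for i \<omega>
    unfolding ci_def cf_def
  proof (rule n0_mono_multi[OF n0_mono finite_idx matof_PiE matof_PiE], intro ballI)
    fix q assume q: "q \<in> idx b s"
    show "matof b s (fun_upd \<omega> i (\<lambda>_. 0)) q \<le> matof b s \<omega> q"
      using q clamp01 by (cases q) (auto simp: matof_apply clamp_id)
  qed
  have n0pos': "n0hat (matof b s \<omega>) > 0" for \<omega> using n0_pos matof_PiE by blast

  define T where "T = {(i,j). (i,j) \<in> idx b s \<and> truenull i j}"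
  have finT: "finite T" unfolding T_def by (rule finite_subset[OF _ finite_idx]) auto
  define fdr where "fdr = (\<lambda>w. let X = pmat b s P w; c = n0hat X in
            real (num_false_rej b s truenull \<alpha> c X) / real (max (num_rej b s \<alpha> c X) 1))"
  have A: "fdr w \<le> (\<Sum>p\<in>T. Fr p (Y w))" if w: "w \<in> space M" for w
  proof -
    let ?X = "matof b s (Y w)"
    have "fdr w = real (num_false_rej b s truenull \<alpha> (cf (Y w)) ?X) / real (max (num_rej b s \<alpha> (cf (Y w)) ?X) 1)"
      unfolding fdr_def cf_def pmatY[OF w] Let_def by simp
    also have "\<dots> \<le> (\<Sum>p\<in>T. (if cf (Y w) * ?X p \<le> real (Df (Y w)) * \<alpha> then 1 / real (Df (Y w)) else 0))"
      unfolding T_def Df_def using fdr_pointwise[OF b s, of \<alpha> truenull "cf (Y w)" ?X] alpha by simp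
    also have "\<dots> \<le> (\<Sum>p\<in>T. Fr p (Y w))"
    proof (rule sum_mono)
      fix p assume "p \<in> T"
      then have p: "p \<in> idx b s" unfolding T_def by auto
      have X0: "0 \<le> ?X p" using matof_apply[OF p] clamp01 by simp
      have le: "ci (fst p) (Y w) * ?X p \<le> cf (Y w) * ?X p"
        using ci_le_cf X0 by (intro mult_right_mono) auto
      show "(if cf (Y w) * ?X p \<le> real (Df (Y w)) * \<alpha> then 1 / real (Df (Y w)) else 0) \<le> Fr p (Y w)"
        unfolding Fr_def using le Fr_nn by auto
    qed
    finally show ?thesis .
  qed
  have du_meas: "du_mat b s truenull P i \<in> measurable M (PiM (idx b s) (\<lambda>_. borel))" for i
    unfolding du_mat_def
  proof (rule measurable_restrict)
    fix q assume q: "q \<in> idx b s"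
    obtain k l where kl: "q = (k,l)" by (cases q)
    have kl2: "k < b" "l < s k" using idxD q kl by auto
    show "(\<lambda>w. case q of (k, l) \<Rightarrow> if k = i \<or> \<not> truenull k l then 0 else P k l w) \<in> borel_measurable M"
      using kl meas kl2 by (cases "k = i \<or> \<not> truenull k l") auto
  qed
  have C: "(\<integral>\<^sup>+ w. ennreal (Fr p (Y w)) \<partial>M) \<le> ennreal \<alpha> * (\<integral>\<^sup>+ w. ennreal (1 / n0hat (du_mat b s truenull P (fst p) w)) \<partial>M)"
    if pT: "p \<in> T" for p
  proof -
    obtain i j where p: "p = (i,j)" by (cases p)
    have ij: "(i,j) \<in> idx b s" "truenull i j" using pT p unfolding T_def by auto
    have ib: "i < b" "j < s i" using idxD[OF ij(1)] by auto
    define J where "J = {..<b} - {i}"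
    have IJ: "{..<b} = insert i J" "i \<notin> J" "finite J" unfolding J_def using ib by auto
    have sets_ins: "sets (PiM (insert i J) \<mu>') = sets (PiM {..<b} Mrow)" using sets_PiM' IJ(1) by simp
    have meas_ins: "measurable (PiM (insert i J) \<mu>') N = measurable (PiM {..<b} Mrow) N" for N :: "'z measure"
      by (rule measurable_cong_sets[OF sets_ins refl])
    have Frm': "(\<lambda>\<omega>. ennreal (Fr p \<omega>)) \<in> borel_measurable (PiM (insert i J) \<mu>')"
      unfolding meas_ins using Fr_meas[of p] by simp
    have hm: "(\<lambda>\<omega>. ennreal (\<alpha> / ci i \<omega>)) \<in> borel_measurable (PiM {..<b} Mrow)"
      using ci_meas[of i] by simp
    have hm': "(\<lambda>\<omega>. ennreal (\<alpha> / ci i \<omega>)) \<in> borel_measurable (PiM (insert i J) \<mu>')"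
      unfolding meas_ins by (rule hm)
    have Df_meas': "Df \<in> measurable (PiM (insert i J) \<mu>') (count_space UNIV)"
      unfolding meas_ins by (rule Df_meas)
    have mu_i: "\<mu>' i = distr M (Mrow i) (prow s P i)" unfolding \<mu>'_def using ib by simp
    have prow_sp: "prow s P i w \<in> space (Mrow i)" if "w \<in> space M" for w
      using measurable_space[OF prow_meas[OF ib(1)] that] .
    have Pij: "clamp (prow s P i w j) = P i j w" if "w \<in> space M" for w
      using prow_apply[OF ib(2)] pval that ib by (auto intro!: clamp_id)
    have mdistr: "measure (\<mu>' i) A = measure M (prow s P i -` A \<inter> space M)" if "A \<in> sets (Mrow i)" for A
      unfolding mu_i using measure_distr[OF prow_meas[OF ib(1)] that] .
    have Zc: "(\<lambda>y::nat \<Rightarrow> real. clamp (y j)) \<in> borel_measurable (Mrow i)"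
      unfolding Mrow_def using ib(2) by (intro measurable_compose[OF _ clamp_meas]) auto
    have unifP: "measure M {w\<in>space M. P i j w \<le> u} = u" if u: "0 \<le> u" "u \<le> 1" for u
    proof -
      have Pm: "P i j \<in> measurable M lborel" using meas ib by simp
      have "measure M {w\<in>space M. P i j w \<le> u} = measure (distr M lborel (P i j)) {..u}"
      proof -
        have "P i j -` {..u} \<inter> space M = {w\<in>space M. P i j w \<le> u}" by auto
        then show ?thesis using measure_distr[OF Pm, of "{..u}"] by simp
      qed
      also have "\<dots> = measure (uniform_measure lborel {0..1}) {..u}" using unif ib ij by simp
      also have "\<dots> = u"
      proof -
        have "{0..1} \<inter> {..u} = {0..u::real}" using u by auto
        then have "emeasure (uniform_measure lborel {0..1::real}) {..u} = ennreal u"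
          using u by (simp add: emeasure_uniform_measure divide_ennreal_def)
        then show ?thesis unfolding measure_def using u by simp
      qed
      finally show ?thesis .
    qed
    have inner: "(\<integral>\<^sup>+ y. ennreal (Fr p (x(i := y))) \<partial>\<mu>' i) \<le> ennreal (\<alpha> / ci i x)"
      if x: "x \<in> space (PiM J \<mu>')" for x
    proof -
      define cc where "cc = ci i x"
      have cc_pos: "cc > 0" unfolding cc_def ci_def using n0pos' by blast
      have ci_upd: "ci i (x(i := y)) = cc" for y unfolding cc_def ci_def by simp
      define D where "D = (\<lambda>y. Df (x(i := y)))"
      define Z where "Z = (\<lambda>y::nat \<Rightarrow> real. clamp (y j))"
      have upd_meas: "(\<lambda>y. x(i := y)) \<in> measurable (\<mu>' i) (PiM (insert i J) \<mu>')"
        by (rule measurable_component_update[OF x IJ(2)])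
      have D_meas: "D \<in> measurable (\<mu>' i) (count_space UNIV)"
        unfolding D_def using measurable_compose[OF upd_meas Df_meas'] .
      have D_meas2: "D \<in> measurable (Mrow i) (count_space UNIV)"
        using D_meas unfolding measurable_cong_sets[OF sets_mu'[of i] refl] .
      have Dsets: "{y\<in>space (Mrow i). D y \<le> k} \<in> sets (Mrow i)" for k
      proof -
        have "D -` {..k} \<inter> space (Mrow i) \<in> sets (Mrow i)" by (rule measurable_sets[OF D_meas2]) simp
        moreover have "D -` {..k} \<inter> space (Mrow i) = {y\<in>space (Mrow i). D y \<le> k}" by auto
        ultimately show ?thesis by simp
      qed
      have Zsets: "{y\<in>space (Mrow i). Z y \<le> u} \<in> sets (Mrow i)" for u
        unfolding Z_def using borel_measurable_le[OF Zc borel_measurable_const[of u]] .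
      have Fr_eq: "Fr p (x(i := y)) = (if Z y \<le> real (D y) * (\<alpha> / cc) then 1 / real (D y) else 0)" for y
      proof -
        have m: "matof b s (x(i := y)) (i,j) = Z y" unfolding Z_def using matof_apply[OF ij(1)] by simp
        have iff: "(cc * Z y \<le> real (D y) * \<alpha>) = (Z y \<le> real (D y) * (\<alpha> / cc))"
          using pos_le_divide_eq[OF cc_pos, of "Z y" "real (D y) * \<alpha>"] by (simp add: mult.commute)
        have dy: "Df (x(i := y)) = D y" unfolding D_def by simp
        show ?thesis unfolding Fr_def p using m ci_upd[of y] iff dy by simp
      qed
      have Dmono: "D y' \<le> D y" if le: "\<forall>k<s i. y k \<le> y' k" for y y' :: "nat \<Rightarrow> real"
      proof -
        let ?X = "matof b s (x(i := y))"
        let ?X' = "matof b s (x(i := y'))"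
        have le2: "\<forall>q\<in>idx b s. ?X q \<le> ?X' q"
        proof
          fix q assume q: "q \<in> idx b s"
          obtain k l where kl: "q = (k,l)" by (cases q)
          have "l < s k" using idxD q kl by auto
          then show "?X q \<le> ?X' q" using le q kl
            by (cases "k = i") (auto simp: matof_apply intro: clamp_mono)
        qed
        have c_le: "n0hat ?X \<le> n0hat ?X'"
          by (rule n0_mono_multi[OF n0_mono finite_idx matof_PiE matof_PiE le2])
        have c_pos: "0 \<le> n0hat ?X" using n0pos' less_imp_le by blast
        have X0: "\<forall>q\<in>idx b s. 0 \<le> ?X q \<and> ?X q \<le> ?X' q" using le2 by (simp add: matof_apply clamp01)
        have "Dv b s \<alpha> (n0hat ?X') ?X' \<le> Dv b s \<alpha> (n0hat ?X) ?X" by (rule Dv_mono[OF b s c_pos c_le X0])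
        then show ?thesis unfolding D_def Df_def cf_def .
      qed
      have measZ: "measure (\<mu>' i) {y\<in>space (\<mu>' i). Z y \<le> u} = measure M {w\<in>space M. P i j w \<le> u}" for u
      proof -
        have "prow s P i -` {y\<in>space (Mrow i). Z y \<le> u} \<inter> space M = {w\<in>space M. P i j w \<le> u}"
          using prow_sp Pij unfolding Z_def by auto
        then show ?thesis using mdistr[OF Zsets[of u]] space_mu' by simp
      qed
      have measDZ: "measure (\<mu>' i) {y\<in>space (\<mu>' i). D y \<le> k \<and> Z y \<le> u}
          = measure M {w\<in>space M. D (prow s P i w) \<le> k \<and> P i j w \<le> u}" for k u
      proof -
        have s1: "{y\<in>space (Mrow i). D y \<le> k \<and> Z y \<le> u} = {y\<in>space (Mrow i). D y \<le> k} \<inter> {y\<in>space (Mrow i). Z y \<le> u}"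
          by auto
        have sets: "{y\<in>space (Mrow i). D y \<le> k \<and> Z y \<le> u} \<in> sets (Mrow i)"
          unfolding s1 using Dsets Zsets by auto
        have "prow s P i -` {y\<in>space (Mrow i). D y \<le> k \<and> Z y \<le> u} \<inter> space M
            = {w\<in>space M. D (prow s P i w) \<le> k \<and> P i j w \<le> u}"
          using prow_sp Pij unfolding Z_def by auto
        then show ?thesis using mdistr[OF sets] space_mu' by simp
      qed
      have "(\<integral>\<^sup>+ y. ennreal (if Z y \<le> real (D y) * (\<alpha> / cc) then 1 / real (D y) else 0) \<partial>\<mu>' i) \<le> ennreal (\<alpha> / cc)"
      proof (rule prds[where b=b])
        show "prob_space (\<mu>' i)" by (rule prob_mu')
        show "Z \<in> borel_measurable (\<mu>' i)"
          unfolding Z_def measurable_cong_sets[OF sets_mu'[of i] refl] using Zc .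
        show "\<forall>y\<in>space (\<mu>' i). 0 \<le> Z y \<and> Z y \<le> 1" unfolding Z_def using clamp01 by blast
        show "measure (\<mu>' i) {y\<in>space (\<mu>' i). Z y \<le> u} = u" if "0 \<le> u" "u \<le> 1" for u
          using measZ unifP that by simp
        show "{y\<in>space (\<mu>' i). D y \<le> k} \<in> sets (\<mu>' i)" for k using Dsets[of k] sets_mu' space_mu' by simp
        show "1 \<le> D y \<and> D y \<le> b" for y unfolding D_def Df_def using Dv_range[OF b] by blast
        show "\<alpha> / cc > 0" using alpha cc_pos by simp
        show "mono_on {0<..<1} (\<lambda>u. measure (\<mu>' i) {y\<in>space (\<mu>' i). D y \<le> k \<and> Z y \<le> u} / measure (\<mu>' i) {y\<in>space (\<mu>' i). Z y \<le> u})" for k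
        proof -
          define \<phi> where "\<phi> = (\<lambda>y. if D y \<le> k then 1 else 0 :: real)"
          have \<phi>m': "\<phi> \<in> borel_measurable (Mrow i)"
            unfolding \<phi>_def using Dsets[of k] by (intro measurable_If borel_measurable_const) auto
          have \<phi>m: "\<phi> \<in> borel_measurable (PiM {..<s i} (\<lambda>_. borel))" using \<phi>m' unfolding Mrow_def by simp
          have \<phi>mono: "\<forall>y y'. (\<forall>k<s i. y k \<le> y' k) \<longrightarrow> \<phi> y \<le> \<phi> y'"
          proof (intro allI impI)
            fix y y' :: "nat \<Rightarrow> real" assume "\<forall>k<s i. y k \<le> y' k"
            then have "D y' \<le> D y" by (rule Dmono)
            then show "\<phi> y \<le> \<phi> y'" unfolding \<phi>_def by auto
          qed
          have \<phi>pm: "(\<lambda>w. \<phi> (prow s P i w)) \<in> borel_measurable M"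
            using measurable_compose[OF prow_meas[OF ib(1)] \<phi>m'] .
          have \<phi>int: "integrable M (\<lambda>w. \<phi> (prow s P i w))"
            by (intro M.integrable_const_bound[where B=1] AE_I2 \<phi>pm) (simp add: \<phi>_def)
          have "\<forall>\<phi> :: (nat \<Rightarrow> real) \<Rightarrow> real.
                    \<phi> \<in> borel_measurable (PiM {..<s i} (\<lambda>_. borel)) \<longrightarrow>
                    (\<forall>x y. (\<forall>k<s i. x k \<le> y k) \<longrightarrow> \<phi> x \<le> \<phi> y) \<longrightarrow>
                    integrable M (\<lambda>w. \<phi> (prow s P i w)) \<longrightarrow>
                    mono_on {0<..<1} (cexp_le M (\<lambda>w. \<phi> (prow s P i w)) (P i j))"
            using posdep ib ij(2) by blast
          then have pdM: "mono_on {0<..<1} (cexp_le M (\<lambda>w. \<phi> (prow s P i w)) (P i j))"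
            using \<phi>m \<phi>mono \<phi>int by blast
          have ceq: "cexp_le M (\<lambda>w. \<phi> (prow s P i w)) (P i j) u
              = measure (\<mu>' i) {y\<in>space (\<mu>' i). D y \<le> k \<and> Z y \<le> u} / measure (\<mu>' i) {y\<in>space (\<mu>' i). Z y \<le> u}" for u
          proof -
            have "(\<integral>w. \<phi> (prow s P i w) * indicator {w\<in>space M. P i j w \<le> u} w \<partial>M)
                = (\<integral>w. indicator {w\<in>space M. D (prow s P i w) \<le> k \<and> P i j w \<le> u} w \<partial>M)"
              by (intro Bochner_Integration.integral_cong refl) (auto simp: \<phi>_def indicator_def)
            also have "\<dots> = measure M {w\<in>space M. D (prow s P i w) \<le> k \<and> P i j w \<le> u}"
            proof -
              have "{w\<in>space M. D (prow s P i w) \<le> k \<and> P i j w \<le> u} \<inter> space M = {w\<in>space M. D (prow s P i w) \<le> k \<and> P i j w \<le> u}"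
                by auto
              then show ?thesis by simp
            qed
            finally show ?thesis unfolding cexp_le_def measDZ measZ by simp
          qed
          show ?thesis
          proof (rule mono_onI)
            fix u v :: real assume uv: "u \<in> {0<..<1}" "v \<in> {0<..<1}" "u \<le> v"
            have "cexp_le M (\<lambda>w. \<phi> (prow s P i w)) (P i j) u \<le> cexp_le M (\<lambda>w. \<phi> (prow s P i w)) (P i j) v"
              by (rule mono_onD[OF pdM uv])
            then show "measure (\<mu>' i) {y\<in>space (\<mu>' i). D y \<le> k \<and> Z y \<le> u} / measure (\<mu>' i) {y\<in>space (\<mu>' i). Z y \<le> u}
                \<le> measure (\<mu>' i) {y\<in>space (\<mu>' i). D y \<le> k \<and> Z y \<le> v} / measure (\<mu>' i) {y\<in>space (\<mu>' i). Z y \<le> v}"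
              unfolding ceq .
          qed
        qed
      qed
      then show ?thesis using Fr_eq unfolding cc_def by simp
    qed

    have "(\<integral>\<^sup>+ w. ennreal (Fr p (Y w)) \<partial>M) = (\<integral>\<^sup>+ \<omega>. ennreal (Fr p \<omega>) \<partial>(PiM {..<b} \<mu>'))"
      unfolding distrY[symmetric] using Fr_meas[of p] by (subst nn_integral_distr[OF Y_meas]) auto
    also have "\<dots> = (\<integral>\<^sup>+ x. (\<integral>\<^sup>+ y. ennreal (Fr p (x(i := y))) \<partial>\<mu>' i) \<partial>(PiM J \<mu>'))"
      unfolding IJ(1) by (rule PS.product_nn_integral_insert[OF IJ(3) IJ(2) Frm'])
    also have "\<dots> \<le> (\<integral>\<^sup>+ x. ennreal (\<alpha> / ci i x) \<partial>(PiM J \<mu>'))"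
      by (intro nn_integral_mono inner)
    also have "\<dots> = (\<integral>\<^sup>+ \<omega>. ennreal (\<alpha> / ci i \<omega>) \<partial>(PiM (insert i J) \<mu>'))"
    proof -
      have "(\<integral>\<^sup>+ y. ennreal (\<alpha> / ci i (x(i := y))) \<partial>\<mu>' i) = ennreal (\<alpha> / ci i x)" for x
      proof -
        have "ci i (x(i := y)) = ci i x" for y unfolding ci_def by simp
        then have "(\<integral>\<^sup>+ y. ennreal (\<alpha> / ci i (x(i := y))) \<partial>\<mu>' i) = (\<integral>\<^sup>+ y. ennreal (\<alpha> / ci i x) \<partial>\<mu>' i)"
          by simp
        also have "\<dots> = ennreal (\<alpha> / ci i x)"
          using prob_space.emeasure_space_1[OF prob_mu'[of i]] by simp
        finally show ?thesis .
      qed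
      then show ?thesis using PS.product_nn_integral_insert[OF IJ(3) IJ(2) hm'] by simp
    qed
    also have "\<dots> = (\<integral>\<^sup>+ w. ennreal (\<alpha> / ci i (Y w)) \<partial>M)"
      unfolding IJ(1)[symmetric] distrY[symmetric] using hm by (subst nn_integral_distr[OF Y_meas]) auto
    also have "\<dots> \<le> (\<integral>\<^sup>+ w. ennreal \<alpha> * ennreal (1 / n0hat (du_mat b s truenull P i w)) \<partial>M)"
    proof (rule nn_integral_mono)
      fix w assume w: "w \<in> space M"
      let ?D = "du_mat b s truenull P i w"
      have DPi: "?D \<in> PiE (idx b s) (\<lambda>_. {0..1})"
        unfolding du_mat_def using pval w by (auto simp: PiE_iff idx_def)
      have Dle: "\<forall>q\<in>idx b s. ?D q \<le> matof b s (fun_upd (Y w) i (\<lambda>_. 0)) q"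
      proof
        fix q assume q: "q \<in> idx b s"
        obtain k l where kl: "q = (k,l)" by (cases q)
        have kl2: "k < b" "l < s k" using idxD q kl by auto
        show "?D q \<le> matof b s (fun_upd (Y w) i (\<lambda>_. 0)) q"
          using q kl kl2 pval w prow_apply[OF kl2(2)] unfolding du_mat_def Y_def
          by (auto simp: matof_apply clamp_id)
      qed
      have pos: "0 < n0hat ?D" using n0_pos DPi by blast
      have le: "n0hat ?D \<le> ci i (Y w)"
        unfolding ci_def by (rule n0_mono_multi[OF n0_mono finite_idx DPi matof_PiE Dle])
      have "\<alpha> / ci i (Y w) \<le> \<alpha> / n0hat ?D" using pos le alpha by (intro divide_left_mono) auto
      then have "ennreal (\<alpha> / ci i (Y w)) \<le> ennreal (\<alpha> * (1 / n0hat ?D))" by (intro ennreal_leI) simp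
      also have "\<dots> = ennreal \<alpha> * ennreal (1 / n0hat ?D)" using alpha pos by (intro ennreal_mult) auto
      finally show "ennreal (\<alpha> / ci i (Y w)) \<le> ennreal \<alpha> * ennreal (1 / n0hat ?D)" .
    qed
    also have "\<dots> = ennreal \<alpha> * (\<integral>\<^sup>+ w. ennreal (1 / n0hat (du_mat b s truenull P i w)) \<partial>M)"
      using measurable_compose[OF du_meas n0_meas] by (intro nn_integral_cmult) simp
    finally show ?thesis using p by simp
  qed


  show ?thesis
  proof (cases "integrable M fdr")
    case False
    then have "abh_fdr M b s truenull \<alpha> n0hat P = 0"
      unfolding abh_fdr_def fdr_def[symmetric] by (rule not_integrable_integral_eq)
    then show ?thesis using alpha by simp
  next
    case True
    have fdr_nn: "0 \<le> fdr w" for w unfolding fdr_def Let_def by simp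
    have "ennreal (abh_fdr M b s truenull \<alpha> n0hat P) = (\<integral>\<^sup>+ w. ennreal (fdr w) \<partial>M)"
      unfolding abh_fdr_def fdr_def[symmetric] using nn_integral_eq_integral[OF True] fdr_nn by simp
    also have "\<dots> \<le> (\<integral>\<^sup>+ w. (\<Sum>p\<in>T. ennreal (Fr p (Y w))) \<partial>M)"
    proof (rule nn_integral_mono)
      fix w assume w: "w \<in> space M"
      have "ennreal (fdr w) \<le> ennreal (\<Sum>p\<in>T. Fr p (Y w))" using A[OF w] by (rule ennreal_leI)
      also have "\<dots> = (\<Sum>p\<in>T. ennreal (Fr p (Y w)))" using Fr_nn by (intro sum_ennreal[symmetric]) auto
      finally show "ennreal (fdr w) \<le> (\<Sum>p\<in>T. ennreal (Fr p (Y w)))" .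
    qed
    also have "\<dots> = (\<Sum>p\<in>T. \<integral>\<^sup>+ w. ennreal (Fr p (Y w)) \<partial>M)"
    proof (rule nn_integral_sum)
      fix p show "(\<lambda>w. ennreal (Fr p (Y w))) \<in> borel_measurable M"
        using measurable_compose[OF Y_meas Fr_meas[of p]] by simp
    qed
    also have "\<dots> \<le> (\<Sum>p\<in>T. ennreal \<alpha> * (\<integral>\<^sup>+ w. ennreal (1 / n0hat (du_mat b s truenull P (fst p) w)) \<partial>M))"
      using C by (intro sum_mono) auto
    also have "\<dots> = ennreal \<alpha> * (\<Sum>p\<in>T. (\<integral>\<^sup>+ w. ennreal (1 / n0hat (du_mat b s truenull P (fst p) w)) \<partial>M))"
      by (simp add: sum_distrib_left)
    also have "(\<Sum>p\<in>T. (\<integral>\<^sup>+ w. ennreal (1 / n0hat (du_mat b s truenull P (fst p) w)) \<partial>M)) \<le> 1"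
    proof -
      define G where "G = (\<lambda>i. \<integral>\<^sup>+ w. ennreal (1 / n0hat (du_mat b s truenull P i w)) \<partial>M)"
      have TS: "T = Sigma {..<b} (\<lambda>i. {j\<in>{..<s i}. truenull i j})" unfolding T_def idx_def by auto
      have "(\<Sum>p\<in>T. G (fst p)) = (\<Sum>i<b. \<Sum>j\<in>{j\<in>{..<s i}. truenull i j}. G i)"
        unfolding TS by (subst sum.Sigma) (auto intro!: sum.cong simp: split_beta)
      also have "\<dots> = (\<Sum>i<b. \<Sum>j<s i. (if truenull i j then 1 else 0) * G i)"
      proof (rule sum.cong[OF refl])
        fix i
        have "(\<Sum>j\<in>{j\<in>{..<s i}. truenull i j}. G i) = (\<Sum>j<s i. if truenull i j then G i else 0)"
          by (rule sum.inter_filter[OF finite_lessThan])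
        moreover have "(\<Sum>j<s i. if truenull i j then G i else 0) = (\<Sum>j<s i. (if truenull i j then 1 else 0) * G i)"
          by (intro sum.cong) auto
        ultimately show "(\<Sum>j\<in>{j\<in>{..<s i}. truenull i j}. G i) = (\<Sum>j<s i. (if truenull i j then 1 else 0) * G i)"
          by (rule trans)
      qed
      finally show ?thesis using n0_du unfolding G_def by simp
    qed
    finally have "ennreal (abh_fdr M b s truenull \<alpha> n0hat P) \<le> ennreal \<alpha> * 1"
      by (simp add: mult_left_mono)
    then show ?thesis using alpha by simp
  qed
qed

end
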